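(* Let $A$ and $G$ be selfadjoint operators in the Hilbert space $\mathcal H$. If $AG$ is bounded and everywhere defined, or $GA$ is bounded and everywhere defined, then either both $A$ and $G$ are bounded and everywhere defined, or the condition "$\rho(AG)\neq\emptyset$ and $\rho(GA)\neq\emptyset$" fails.
   Context: $(\mathcal H,(\cdot,\cdot))$ is a complex Hilbert space; $A,G$ are possibly unbounded selfadjoint operators; $AG$, $GA$ are the operator products with natural domains. For a linear operator $S$, $\rho(S)$ is the set of $\lambda\in\mathbb C$ such that $S-\lambda$ is injective, surjective and has a bounded everywhere defined inverse. *)

theory Defs
  imports "HOL-Analysis.Analysis"
begin

text \<open>HOL-Analysis has no complex inner product spaces, so we introduce a class:
a real Banach space with a compatible complex scalar multiplication and a complex
inner product (linear in the first argument) that induces the norm.\<close>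

class complex_hilbert = real_normed_vector + complete_space +
  fixes cscale :: "complex \<Rightarrow> 'a \<Rightarrow> 'a"
    and cinner :: "'a \<Rightarrow> 'a \<Rightarrow> complex"
  assumes cscale_add_right: "cscale a (x + y) = cscale a x + cscale a y"
    and cscale_add_left: "cscale (a + b) x = cscale a x + cscale b x"
    and cscale_cscale: "cscale a (cscale b x) = cscale (a * b) x"
    and cscale_one: "cscale 1 x = x"
    and scaleR_cscale: "scaleR r x = cscale (complex_of_real r) x"
    and cinner_cnj: "cinner x y = cnj (cinner y x)"
    and cinner_add_left: "cinner (x + y) z = cinner x z + cinner y z"
    and cinner_cscale_left: "cinner (cscale a x) y = a * cinner x y"
    and cinner_self_norm: "cinner x x = complex_of_real ((norm x)\<^sup>2)"

instantiation complex :: complex_hilbert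
begin
definition cscale_complex :: "complex \<Rightarrow> complex \<Rightarrow> complex" where
  "cscale_complex a x = a * x"
definition cinner_complex :: "complex \<Rightarrow> complex \<Rightarrow> complex" where
  "cinner_complex x y = x * cnj y"
instance
proof
  fix a b :: complex and x y z :: complex and r :: real
  show "cscale a (x + y) = cscale a x + cscale a y" by (simp add: cscale_complex_def algebra_simps)
  show "cscale (a + b) x = cscale a x + cscale b x" by (simp add: cscale_complex_def algebra_simps)
  show "cscale a (cscale b x) = cscale (a * b) x" by (simp add: cscale_complex_def)
  show "cscale 1 x = x" by (simp add: cscale_complex_def)
  show "scaleR r x = cscale (complex_of_real r) x" by (simp add: cscale_complex_def scaleR_conv_of_real)
  show "cinner x y = cnj (cinner y x)" by (simp add: cinner_complex_def)
  show "cinner (x + y) z = cinner x z + cinner y z" by (simp add: cinner_complex_def algebra_simps)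
  show "cinner (cscale a x) y = a * cinner x y" by (simp add: cinner_complex_def cscale_complex_def)
  show "cinner x x = complex_of_real ((norm x)\<^sup>2)" by (simp add: cinner_complex_def complex_mult_cnj cmod_def)
qed
end

text \<open>An operator is a pair (domain, action). Only its values on the domain matter.\<close>
type_synonym 'a op = "'a set \<times> ('a \<Rightarrow> 'a)"

definition dom_op :: "'a op \<Rightarrow> 'a set" where "dom_op T = fst T"
definition app_op :: "'a op \<Rightarrow> 'a \<Rightarrow> 'a" where "app_op T = snd T"

definition graph_op :: "'a op \<Rightarrow> ('a \<times> 'a) set" where
  "graph_op T = {(x, app_op T x) | x. x \<in> dom_op T}"

definition linear_op :: "'a::complex_hilbert op \<Rightarrow> bool" where
  "linear_op T \<longleftrightarrow> 0 \<in> dom_op T \<and>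
     (\<forall>x\<in>dom_op T. \<forall>y\<in>dom_op T. \<forall>a b. cscale a x + cscale b y \<in> dom_op T \<and>
        app_op T (cscale a x + cscale b y) = cscale a (app_op T x) + cscale b (app_op T y))"

definition densely_defined :: "'a::complex_hilbert op \<Rightarrow> bool" where
  "densely_defined T \<longleftrightarrow> closure (dom_op T) = UNIV"

definition adjoint_graph :: "'a::complex_hilbert op \<Rightarrow> ('a \<times> 'a) set" where
  "adjoint_graph T = {(y, z). \<forall>x\<in>dom_op T. cinner (app_op T x) y = cinner x z}"

definition selfadjoint :: "'a::complex_hilbert op \<Rightarrow> bool" where
  "selfadjoint T \<longleftrightarrow> linear_op T \<and> densely_defined T \<and> adjoint_graph T = graph_op T"

definition prod_op :: "'a op \<Rightarrow> 'a op \<Rightarrow> 'a op" where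
  "prod_op S T = ({x \<in> dom_op T. app_op T x \<in> dom_op S}, \<lambda>x. app_op S (app_op T x))"

definition bounded_everywhere :: "'a::complex_hilbert op \<Rightarrow> bool" where
  "bounded_everywhere T \<longleftrightarrow> dom_op T = UNIV \<and>
     (\<exists>K. \<forall>x. norm (app_op T x) \<le> K * norm x)"

definition resolvent_set :: "'a::complex_hilbert op \<Rightarrow> complex set" where
  "resolvent_set S = {l.
     inj_on (\<lambda>x. app_op S x - cscale l x) (dom_op S) \<and>
     (\<lambda>x. app_op S x - cscale l x) ` dom_op S = UNIV \<and>
     (\<exists>K. \<forall>x\<in>dom_op S. norm x \<le> K * norm (app_op S x - cscale l x))}"

end

theory Submission imports Defs begin


lemma cscale_zero_left[simp]: "cscale 0 (x::'a::complex_hilbert) = 0"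
  using scaleR_cscale[of 0 x] by simp
lemma cscale_minus_one: "cscale (-1) (x::'a::complex_hilbert) = - x"
  using scaleR_cscale[of "-1" x] by simp
lemma cscale_zero_right[simp]: "cscale a (0::'a::complex_hilbert) = 0"
  using cscale_add_right[of a 0 0] by simp
lemma cscale_minus_right: "cscale a (- x::'a::complex_hilbert) = - cscale a x"
  using cscale_add_right[of a "-x" x] by (simp add: eq_neg_iff_add_eq_0)
lemma cscale_diff_right: "cscale a (x - y::'a::complex_hilbert) = cscale a x - cscale a y"
  using cscale_add_right[of a x "-y"] by (simp add: cscale_minus_right)
lemma cinner_zero_left[simp]: "cinner (0::'a::complex_hilbert) y = 0"
  using cinner_add_left[of 0 0 y] by simp
lemma cinner_zero_right[simp]: "cinner (x::'a::complex_hilbert) 0 = 0"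
  using cinner_cnj[of x 0] by simp
lemma cinner_add_right: "cinner (x::'a::complex_hilbert) (y + z) = cinner x y + cinner x z"
  using cinner_cnj[of x "y+z"] cinner_cnj[of x y] cinner_cnj[of x z] cinner_add_left[of y z x] by simp
lemma cinner_cscale_right: "cinner (x::'a::complex_hilbert) (cscale a y) = cnj a * cinner x y"
  using cinner_cnj[of x "cscale a y"] cinner_cnj[of x y] cinner_cscale_left[of a y x] by simp
lemma cinner_minus_left: "cinner (- x::'a::complex_hilbert) y = - cinner x y"
  using cinner_cscale_left[of "-1" x y] by (simp add: cscale_minus_one)
lemma cinner_minus_right: "cinner (x::'a::complex_hilbert) (- y) = - cinner x y"
  using cinner_cscale_right[of x "-1" y] by (simp add: cscale_minus_one)
lemma cinner_diff_left: "cinner (x - y::'a::complex_hilbert) z = cinner x z - cinner y z"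
  using cinner_add_left[of x "-y" z] by (simp add: cinner_minus_left)
lemma cinner_diff_right: "cinner (x::'a::complex_hilbert) (y - z) = cinner x y - cinner x z"
  using cinner_add_right[of x y "-z"] by (simp add: cinner_minus_right)
lemma cinner_scaleR_left: "cinner (scaleR r x::'a::complex_hilbert) y = complex_of_real r * cinner x y"
  by (simp add: scaleR_cscale cinner_cscale_left)
lemma cinner_scaleR_right: "cinner (x::'a::complex_hilbert) (scaleR r y) = complex_of_real r * cinner x y"
  by (simp add: scaleR_cscale cinner_cscale_right)

definition rinner :: "'a::complex_hilbert \<Rightarrow> 'a \<Rightarrow> real" where
  "rinner x y = Re (cinner x y)"

lemma rinner_sym: "rinner x y = rinner y x"
  unfolding rinner_def using cinner_cnj[of x y] by simp
lemma rinner_self: "rinner x x = (norm x)^2"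
  unfolding rinner_def using cinner_self_norm[of x] by simp
lemma rinner_add_left: "rinner (x + y) z = rinner x z + rinner y z"
  unfolding rinner_def by (simp add: cinner_add_left)
lemma rinner_add_right: "rinner x (y + z) = rinner x y + rinner x z"
  unfolding rinner_def by (simp add: cinner_add_right)
lemma rinner_diff_left: "rinner (x - y) z = rinner x z - rinner y z"
  unfolding rinner_def by (simp add: cinner_diff_left)
lemma rinner_diff_right: "rinner x (y - z) = rinner x y - rinner x z"
  unfolding rinner_def by (simp add: cinner_diff_right)
lemma rinner_scaleR_left: "rinner (scaleR r x) y = r * rinner x y"
  unfolding rinner_def by (simp add: cinner_scaleR_left)
lemma rinner_scaleR_right: "rinner x (scaleR r y) = r * rinner x y"
  unfolding rinner_def by (simp add: cinner_scaleR_right)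
lemma rinner_zero_right[simp]: "rinner x 0 = 0" unfolding rinner_def by simp
lemma rinner_zero_left[simp]: "rinner 0 x = 0" unfolding rinner_def by simp

lemma rinner_CS: "\<bar>rinner (x::'a::complex_hilbert) y\<bar> \<le> norm x * norm y"
proof (cases "x = 0 \<or> y = 0")
  case True then show ?thesis by auto
next
  case False
  define a where "a = norm x"
  define b where "b = norm y"
  define r where "r = rinner x y"
  have ab: "a > 0" "b > 0" using False by (auto simp: a_def b_def)
  have e1: "rinner (scaleR b x - scaleR a y) (scaleR b x - scaleR a y) = 2*a^2*b^2 - 2*a*b*r"
    by (simp add: rinner_diff_left rinner_diff_right rinner_scaleR_left rinner_scaleR_right
        rinner_self[of x] rinner_self[of y] rinner_sym[of y x] a_def b_def r_def power2_eq_square algebra_simps)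
  have e2: "rinner (scaleR b x + scaleR a y) (scaleR b x + scaleR a y) = 2*a^2*b^2 + 2*a*b*r"
    by (simp add: rinner_add_left rinner_add_right rinner_scaleR_left rinner_scaleR_right
        rinner_self[of x] rinner_self[of y] rinner_sym[of y x] a_def b_def r_def power2_eq_square algebra_simps)
  have "0 \<le> 2*a^2*b^2 - 2*a*b*r" using e1 rinner_self by (metis zero_le_power2)
  moreover have "0 \<le> 2*a^2*b^2 + 2*a*b*r" using e2 rinner_self by (metis zero_le_power2)
  ultimately have "a*b*r \<le> a*b*(a*b)" "a*b*(-r) \<le> a*b*(a*b)"
    by (auto simp: power2_eq_square algebra_simps)
  then have "r \<le> a*b" "-r \<le> a*b" using ab
    by (metis mult_le_cancel_left_pos mult_pos_pos)+
  then show ?thesis by (simp add: a_def b_def r_def abs_le_iff)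
qed


lemma lin_diff:
  assumes "linear_op T" "x \<in> dom_op T" "y \<in> dom_op T"
  shows "x - y \<in> dom_op T \<and> app_op T (x - y) = app_op T x - app_op T y"
  using assms unfolding linear_op_def
  by (metis cscale_minus_one cscale_one diff_conv_add_uminus)

lemma lin_scaleR:
  assumes "linear_op T" "x \<in> dom_op T"
  shows "scaleR r x \<in> dom_op T \<and> app_op T (scaleR r x) = scaleR r (app_op T x)"
proof -
  have "cscale (complex_of_real r) x + cscale 0 x \<in> dom_op T \<and>
     app_op T (cscale (complex_of_real r) x + cscale 0 x) = cscale (complex_of_real r) (app_op T x) + cscale 0 (app_op T x)"
    using assms unfolding linear_op_def by blast
  then show ?thesis by (simp add: scaleR_cscale)
qed

lemma lin_zero: "linear_op T \<Longrightarrow> app_op T 0 = 0"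
  using lin_diff[of T 0 0] unfolding linear_op_def by auto

lemma sa_sym:
  assumes "selfadjoint T" "x \<in> dom_op T" "y \<in> dom_op T"
  shows "cinner (app_op T x) y = cinner x (app_op T y)"
proof -
  have "(y, app_op T y) \<in> adjoint_graph T"
    using assms unfolding selfadjoint_def graph_op_def by auto
  then show ?thesis using assms(2) unfolding adjoint_graph_def by auto
qed

lemma rinner_bl: "bounded_linear (\<lambda>y. rinner (a::'a::complex_hilbert) y)"
proof (rule bounded_linear_intro)
  show "rinner a (x + y) = rinner a x + rinner a y" for x y by (rule rinner_add_right)
  show "rinner a (r *\<^sub>R x) = r *\<^sub>R rinner a x" for r x by (simp add: rinner_scaleR_right)
  show "norm (rinner a x) \<le> norm x * norm a" for x
    using rinner_CS[of a x] by (simp add: mult.commute)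
qed

lemma hellinger_toeplitz:
  fixes T :: "'a::complex_hilbert op"
  assumes lin: "linear_op T" and dom: "dom_op T = UNIV"
    and sym: "\<And>x y. rinner (app_op T x) y = rinner x (app_op T y)"
  shows "\<exists>K. \<forall>x. norm (app_op T x) \<le> K * norm x"
proof -
  define F where "F n = {y. \<forall>x. \<bar>rinner (app_op T x) y\<bar> \<le> real n * norm x}" for n :: nat
  have closedF: "closed (F n)" for n
  proof -
    have "F n = (\<Inter>x. {y. \<bar>rinner (app_op T x) y\<bar> \<le> real n * norm x})"
      unfolding F_def by auto
    moreover have "closed {y. \<bar>rinner (app_op T x) y\<bar> \<le> real n * norm x}" for x
    proof -
      have "continuous_on UNIV (\<lambda>y. \<bar>rinner (app_op T x) y\<bar>)"
        by (intro continuous_intros linear_continuous_on rinner_bl)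
      from closed_Collect_le[OF this continuous_on_const] show ?thesis by simp
    qed
    ultimately show ?thesis by auto
  qed
  have coverF: "\<Union>(range F) = UNIV"
  proof safe
    fix y
    have "y \<in> F (nat \<lceil>norm (app_op T y)\<rceil>)"
      unfolding F_def
    proof safe
      fix x
      have "\<bar>rinner (app_op T x) y\<bar> = \<bar>rinner x (app_op T y)\<bar>" by (simp add: sym)
      also have "\<dots> \<le> norm x * norm (app_op T y)" by (rule rinner_CS)
      also have "\<dots> \<le> norm x * real (nat \<lceil>norm (app_op T y)\<rceil>)"
        by (intro mult_left_mono) (auto simp: real_nat_ceiling_ge)
      finally show "\<bar>rinner (app_op T x) y\<bar> \<le> real (nat \<lceil>norm (app_op T y)\<rceil>) * norm x"
        by (simp add: mult.commute)
    qed
    then show "y \<in> \<Union>(range F)" by blast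
  qed simp
  obtain n where "interior (F n) \<noteq> {}"
  proof (rule ccontr)
    assume "\<not> thesis"
    then have "\<forall>n. interior (F n) = {}" using that by blast
    then have "euclidean interior_of \<Union>(range F) = {}"
      by (intro Baire_category_alt completely_metrizable_space_euclidean disjI1)
         (auto simp: closedF)
    then show False using coverF by simp
  qed
  then obtain y0 where "y0 \<in> interior (F n)" by blast
  then obtain r where r: "r > 0" "ball y0 r \<subseteq> F n"
    using open_contains_ball interior_subset open_interior by (metis subset_trans)
  have key: "\<bar>rinner (app_op T x) z\<bar> \<le> 2 * real n * norm x" if "norm z < r" for x z
  proof -
    have "y0 \<in> F n" "y0 + z \<in> F n" using r that by (auto simp: dist_norm)
    then have "\<bar>rinner (app_op T x) y0\<bar> \<le> real n * norm x"
      "\<bar>rinner (app_op T x) (y0 + z)\<bar> \<le> real n * norm x" unfolding F_def by auto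
    then show ?thesis by (simp add: rinner_add_right)
  qed
  have "norm (app_op T x) \<le> (4 * real n / r) * norm x" for x
  proof (cases "app_op T x = 0")
    case True then show ?thesis using r by simp
  next
    case False
    define c where "c = (r/2) / norm (app_op T x)"
    have c: "c > 0" using False r by (simp add: c_def)
    have "norm (scaleR c (app_op T x)) < r" using False r by (simp add: c_def)
    then have "\<bar>rinner (app_op T x) (scaleR c (app_op T x))\<bar> \<le> 2 * real n * norm x" by (rule key)
    moreover have "rinner (app_op T x) (scaleR c (app_op T x)) = (r/2) * norm (app_op T x)"
      using False by (simp add: rinner_scaleR_right rinner_self c_def power2_eq_square)
    ultimately have "(r/2) * norm (app_op T x) \<le> 2 * real n * norm x" using r by simp
    then show ?thesis using r by (simp add: field_simps)
  qed
  then show ?thesis by blast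
qed


lemma norm_cscale: "norm (cscale a (x::'a::complex_hilbert)) = cmod a * norm x"
proof -
  have "cinner (cscale a x) (cscale a x) = a * cnj a * cinner x x"
    by (simp add: cinner_cscale_left cinner_cscale_right)
  also have "\<dots> = complex_of_real ((cmod a)\<^sup>2) * complex_of_real ((norm x)\<^sup>2)"
    by (simp only: complex_norm_square[symmetric] of_real_power cinner_self_norm)
  finally have "complex_of_real ((norm (cscale a x))\<^sup>2) = complex_of_real ((cmod a)\<^sup>2 * (norm x)\<^sup>2)"
    by (simp only: cinner_self_norm of_real_mult)
  then have "(norm (cscale a x))\<^sup>2 = (cmod a * norm x)\<^sup>2"
    by (simp only: of_real_eq_iff power_mult_distrib)
  then show ?thesis by (simp add: power2_eq_iff_nonneg)
qed

lemma cscale_bl: "bounded_linear (cscale a :: 'a::complex_hilbert \<Rightarrow> 'a)"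
proof (rule bounded_linear_intro)
  show "cscale a (x + y) = cscale a x + cscale a y" for x y :: 'a by (rule cscale_add_right)
  show "cscale a (r *\<^sub>R x) = r *\<^sub>R cscale a x" for r and x :: 'a
    by (simp add: scaleR_cscale cscale_cscale mult.commute)
  show "norm (cscale a x) \<le> norm x * cmod a" for x :: 'a by (simp add: norm_cscale)
qed

lemma dom_prod: "dom_op (prod_op S T) = {x \<in> dom_op T. app_op T x \<in> dom_op S}"
  by (simp add: prod_op_def dom_op_def)
lemma app_prod: "app_op (prod_op S T) x = app_op S (app_op T x)"
  by (simp add: prod_op_def app_op_def)

lemma Cauchy_lip:
  fixes s :: "nat \<Rightarrow> 'a::metric_space" and f :: "'a \<Rightarrow> 'b::metric_space"
  assumes "Cauchy s" "\<And>m n. dist (f (s m)) (f (s n)) \<le> M * dist (s m) (s n)"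
  shows "Cauchy (\<lambda>n. f (s n))"
proof (rule metric_CauchyI)
  fix e :: real assume e: "e > 0"
  define M' where "M' = max M 0 + 1"
  have M': "M' > 0" "M \<le> M'" by (auto simp: M'_def)
  obtain N where N: "\<And>m n. m \<ge> N \<Longrightarrow> n \<ge> N \<Longrightarrow> dist (s m) (s n) < e / M'"
    using metric_CauchyD[OF assms(1), of "e/M'"] e M' by auto
  have "dist (f (s m)) (f (s n)) < e" if "m \<ge> N" "n \<ge> N" for m n
  proof -
    have "dist (f (s m)) (f (s n)) \<le> M' * dist (s m) (s n)"
      using assms(2)[of m n] M' by (meson mult_right_mono order_trans zero_le_dist)
    also have "\<dots> < M' * (e / M')" using N[OF that] M' by (intro mult_strict_left_mono) auto
    also have "\<dots> = e" using M' by simp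
    finally show ?thesis .
  qed
  then show "\<exists>M. \<forall>m\<ge>M. \<forall>n\<ge>M. dist (f (s m)) (f (s n)) < e" by blast
qed

lemma main_aux:
  fixes A G :: "'a::complex_hilbert op"
  assumes sA: "selfadjoint A" and sG: "selfadjoint G"
    and bAG: "bounded_everywhere (prod_op A G)" and l: "l \<in> resolvent_set (prod_op G A)"
  shows "bounded_everywhere A \<and> bounded_everywhere G"
proof -
  have linA: "linear_op A" and linG: "linear_op G" using sA sG by (auto simp: selfadjoint_def)
  have domG: "dom_op G = UNIV" and GA: "\<And>z. app_op G z \<in> dom_op A"
    using bAG by (auto simp: bounded_everywhere_def dom_prod)
  obtain K where K: "\<And>x. norm (app_op A (app_op G x)) \<le> K * norm x"
    using bAG by (auto simp: bounded_everywhere_def app_prod)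
  define M where "M = max K 0"
  have KM: "K \<le> M" "0 \<le> M" by (auto simp: M_def)
  have symG: "rinner (app_op G x) y = rinner x (app_op G y)" for x y
    using sa_sym[OF sG] domG by (simp add: rinner_def)
  have symA: "rinner (app_op A x) y = rinner x (app_op A y)" if "x \<in> dom_op A" "y \<in> dom_op A" for x y
    using sa_sym[OF sA that] by (simp add: rinner_def)
  obtain KG where KG: "\<And>x. norm (app_op G x) \<le> KG * norm x"
    using hellinger_toeplitz[OF linG domG symG] by blast
  have bGA: "norm (app_op G (app_op A x)) \<le> M * norm x" if x: "x \<in> dom_op A" for x
  proof -
    define w where "w = app_op G (app_op A x)"
    have "(norm w)^2 = rinner w w" by (simp add: rinner_self)
    also have "\<dots> = rinner (app_op A x) (app_op G w)" by (simp add: w_def symG)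
    also have "\<dots> = rinner x (app_op A (app_op G w))" using x GA by (simp add: symA)
    also have "\<dots> \<le> norm x * norm (app_op A (app_op G w))" using rinner_CS abs_le_iff by blast
    also have "\<dots> \<le> norm x * (M * norm w)"
    proof (rule mult_left_mono)
      show "norm (app_op A (app_op G w)) \<le> M * norm w"
        using K[of w] KM by (meson mult_right_mono norm_ge_zero order_trans)
    qed simp
    finally have *: "norm w * norm w \<le> (M * norm x) * norm w" by (simp add: power2_eq_square algebra_simps)
    show ?thesis
    proof (cases "w = 0")
      case True then show ?thesis using KM by (simp add: w_def)
    next
      case False then show ?thesis using * by (simp add: w_def)
    qed
  qed
  define S where "S = (\<lambda>x. app_op G (app_op A x) - cscale l x)"
  have domGA: "dom_op (prod_op G A) = dom_op A" by (simp add: dom_prod domG)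
  have surj: "S ` dom_op A = UNIV" and "\<exists>K2. \<forall>x\<in>dom_op A. norm x \<le> K2 * norm (S x)"
    using l unfolding resolvent_set_def S_def by (auto simp: domGA app_prod)
  then obtain K2 where K2: "\<And>x. x \<in> dom_op A \<Longrightarrow> norm x \<le> K2 * norm (S x)" by blast
  have Sdiff: "S (u - v) = S u - S v" "u - v \<in> dom_op A" if "u \<in> dom_op A" "v \<in> dom_op A" for u v
    using lin_diff[OF linA that] lin_diff[OF linG, of "app_op A u" "app_op A v"] domG
    by (auto simp: S_def cscale_diff_right)
  have closedA: "closed (dom_op A)"
    unfolding closed_sequential_limits
  proof (intro allI impI, elim conjE)
    fix s x assume sA: "\<forall>n. s n \<in> dom_op A" and sx: "s \<longlonglongrightarrow> x"
    have "Cauchy (\<lambda>n. app_op G (app_op A (s n)))"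
    proof (rule Cauchy_lip[of s _ M])
      show "Cauchy s" using sx by (rule LIMSEQ_imp_Cauchy)
      fix m n
      have "dist (app_op G (app_op A (s m))) (app_op G (app_op A (s n)))
          = norm (app_op G (app_op A (s m - s n)))"
        using lin_diff[OF linA, of "s m" "s n"] lin_diff[OF linG, of "app_op A (s m)" "app_op A (s n)"] sA domG
        by (simp add: dist_norm)
      also have "\<dots> \<le> M * norm (s m - s n)" using bGA lin_diff[OF linA] sA by blast
      finally show "dist (app_op G (app_op A (s m))) (app_op G (app_op A (s n))) \<le> M * dist (s m) (s n)"
        by (simp add: dist_norm)
    qed
    then obtain w where w: "(\<lambda>n. app_op G (app_op A (s n))) \<longlonglongrightarrow> w"
      using Cauchy_convergent_iff convergent_def by blast
    have Ss: "(\<lambda>n. S (s n)) \<longlonglongrightarrow> w - cscale l x"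
      unfolding S_def by (intro tendsto_diff w bounded_linear.tendsto[OF cscale_bl] sx)
    obtain y where y: "y \<in> dom_op A" "S y = w - cscale l x" using surj by (metis UNIV_I imageE)
    have "(\<lambda>n. S (s n) - S y) \<longlonglongrightarrow> 0" using Ss y by (simp add: LIM_zero)
    then have tK: "(\<lambda>n. K2 * norm (S (s n) - S y)) \<longlonglongrightarrow> 0"
      by (intro tendsto_mult_right_zero tendsto_norm_zero)
    have bnd: "norm (s n - y) \<le> K2 * norm (S (s n) - S y)" for n
    proof -
      have d: "s n - y \<in> dom_op A" using Sdiff(2) sA y by blast
      have e: "S (s n - y) = S (s n) - S y" using Sdiff(1) sA y by blast
      show ?thesis using K2[OF d] unfolding e .
    qed
    have "(\<lambda>n. s n - y) \<longlonglongrightarrow> 0"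
      by (rule Lim_null_comparison[OF always_eventually tK]) (rule allI, rule bnd)
    then have "s \<longlonglongrightarrow> y" by (simp add: LIM_zero_iff)
    then have "x = y" using sx LIMSEQ_unique by blast
    then show "x \<in> dom_op A" using y by simp
  qed
  have domA: "dom_op A = UNIV"
    using sA closedA closure_closed unfolding selfadjoint_def densely_defined_def by metis
  have symA': "rinner (app_op A x) y = rinner x (app_op A y)" for x y using symA domA by simp
  obtain KA where KA: "\<And>x. norm (app_op A x) \<le> KA * norm x"
    using hellinger_toeplitz[OF linA domA symA'] by blast
  show ?thesis unfolding bounded_everywhere_def using domA domG KA KG by blast
qed

theorem mainTheorem4:
  fixes A G :: "'a::complex_hilbert op"
  assumes "selfadjoint A" and "selfadjoint G"
    and "bounded_everywhere (prod_op A G) \<or> bounded_everywhere (prod_op G A)"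
  shows "(bounded_everywhere A \<and> bounded_everywhere G) \<or>
         \<not> (resolvent_set (prod_op A G) \<noteq> {} \<and> resolvent_set (prod_op G A) \<noteq> {})"
  using assms main_aux[of A G] main_aux[of G A] by blast

end
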